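(* For every integer $d\ge 2$, the uniform probability measure $\mu^{\{0,1\}}_{n,d}$ on the set of $1$-Lipschitz functions $f\colon V(\mathbb{T}^n_d)\to\mathbb{Z}$ taking values in $\{0,1\}$ at every vertex at distance exactly $n$ from the root converges (in the local weak sense) as $n\to\infty$.
   Context: A $d$-ary tree $\mathbb{T}_d$ is an infinite tree with a distinguished root vertex $\rho$ of degree $d$, all other vertices having degree $d+1$. $\mathbb{T}^n_d$ is the finite subtree induced by the vertices at graph distance at most $n$ from $\rho$; its leaves are the vertices at distance exactly $n$. A $1$-Lipschitz function is an integer-valued function $f$ with $|f(u)-f(v)|\le 1$ for all adjacent $u,v$. Local weak convergence means: for every fixed $r\ge0$, the law of the restriction of $f$ to the vertices within distance $r$ of $\rho$ converges as $n\to\infty$ to a probability measure. *)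

theory Defs
  imports "HOL-Probability.Probability"
begin

text \<open>Vertices of the d-ary tree: finite words over the alphabet {0..<d};
  the root is the empty word, the children of v are v @ [i] for i < d.
  The depth (graph distance to the root) of a word is its length.\<close>

definition tree_ball :: "nat \<Rightarrow> nat \<Rightarrow> nat list set" where
  "tree_ball d n = {xs. set xs \<subseteq> {..<d} \<and> length xs \<le> n}"

definition tree_adj :: "nat list \<Rightarrow> nat list \<Rightarrow> bool" where
  "tree_adj u v \<longleftrightarrow> (\<exists>i. v = u @ [i]) \<or> (\<exists>i. u = v @ [i])"

text \<open>Functions are normalised to 0 outside the vertex set,
  so that this set is in bijection with the functions V(T^n_d) -> Z.\<close>
definition lip01 :: "nat \<Rightarrow> nat \<Rightarrow> (nat list \<Rightarrow> int) set" where
  "lip01 d n = {f. (\<forall>u\<in>tree_ball d n. \<forall>v\<in>tree_ball d n. tree_adj u v \<longrightarrow> \<bar>f u - f v\<bar> \<le> 1)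
                 \<and> (\<forall>u\<in>tree_ball d n. length u = n \<longrightarrow> f u \<in> {0, 1})
                 \<and> (\<forall>u. u \<notin> tree_ball d n \<longrightarrow> f u = 0)}"

definition mu01 :: "nat \<Rightarrow> nat \<Rightarrow> (nat list \<Rightarrow> int) pmf" where
  "mu01 d n = pmf_of_set (lip01 d n)"

definition restr_ball :: "nat \<Rightarrow> nat \<Rightarrow> (nat list \<Rightarrow> int) \<Rightarrow> (nat list \<Rightarrow> int)" where
  "restr_ball d r f = (\<lambda>v. if v \<in> tree_ball d r then f v else 0)"

end

theory Submission
  imports Defs
begin

definition Uop :: "nat \<Rightarrow> (nat \<Rightarrow> real) \<Rightarrow> nat \<Rightarrow> real" where
  "Uop d a k = (a (Suc k) + a k + a (k - 1)) ^ d"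

lemma Uop_nonneg: "(\<And>k. 0 \<le> a k) \<Longrightarrow> 0 \<le> Uop d a k"
  by (simp add: Uop_def)

lemma Uop_half:
  assumes d: "2 \<le> d" and nn: "\<And>k. 0 \<le> a k" and h: "\<And>k. 2 * a (Suc k) \<le> a k"
  shows "2 * Uop d a (Suc k) \<le> Uop d a k"
proof -
  have km: "a k \<le> a (k - 1)"
  proof (cases k)
    case 0 then show ?thesis by simp
  next
    case (Suc j) then show ?thesis using h[of j] nn[of "Suc j"] by simp
  qed
  define S1 where "S1 = a (Suc (Suc k)) + a (Suc k) + a k"
  define S0 where "S0 = a (Suc k) + a k + a (k - 1)"
  have s1: "0 \<le> S1" unfolding S1_def using nn by (simp add: add_nonneg_nonneg)
  have "10 * S1 \<le> 7 * S0"
  proof -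
    obtain c where c: "c = a (k - 1)" by simp
    show ?thesis unfolding S1_def S0_def c[symmetric] using h[of k] h[of "Suc k"] km nn[of k] nn[of "Suc k"] c
      by (simp add: algebra_simps)
  qed
  hence le: "S1 \<le> (7/10) * S0" by simp
  have "S1 ^ d \<le> ((7/10) * S0) ^ d" using le s1 by (rule power_mono)
  also have "\<dots> = (7/10)^d * S0 ^ d" by (rule power_mult_distrib)
  also have "\<dots> \<le> (7/10)^2 * S0 ^ d"
    by (intro mult_right_mono power_decreasing d) (use s1 le in auto)
  finally have "S1 ^ d \<le> (49/100) * S0 ^ d" by (simp add: power2_eq_square)
  moreover have "0 \<le> S0 ^ d" using s1 le by (intro zero_le_power) linarith
  ultimately have "2 * S1 ^ d \<le> S0 ^ d" by linarith
  thus ?thesis by (simp add: Uop_def S1_def S0_def)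
qed

definition Rord :: "(nat \<Rightarrow> real) \<Rightarrow> (nat \<Rightarrow> real) \<Rightarrow> bool" where
  "Rord a b \<longleftrightarrow> (\<forall>k. a (Suc k) * b k \<le> b (Suc k) * a k)"

lemma Rord_chain:
  assumes na: "\<And>k. 0 \<le> a k" and nb: "\<And>k. 0 \<le> b k"
    and da: "\<And>k. a (Suc k) \<le> a k" and db: "\<And>k. b (Suc k) \<le> b k"
    and R: "Rord a b" and qp: "q \<le> p"
  shows "a p * b q \<le> b p * a q"
  using qp
proof (induction p)
  case 0 then show ?case by simp
next
  case (Suc p)
  show ?case
  proof (cases "q = Suc p")
    case True then show ?thesis by simp
  next
    case False
    hence qp: "q \<le> p" using Suc.prems by simp
    have IH: "a p * b q \<le> b p * a q" using Suc.IH qp by simp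
    have adj: "a (Suc p) * b p \<le> b (Suc p) * a p" using R unfolding Rord_def by simp
    show ?thesis
    proof (cases "b p = 0")
      case True
      hence bs: "b (Suc p) = 0" using db[of p] nb[of "Suc p"] by simp
      have "a p * b q \<le> 0" using IH True by simp
      hence "a p * b q = 0" using na[of p] nb[of q] by (meson antisym mult_nonneg_nonneg)
      hence "a p = 0 \<or> b q = 0" by simp
      thus ?thesis
      proof
        assume "a p = 0"
        hence "a (Suc p) = 0" using da[of p] na[of "Suc p"] by simp
        thus ?thesis using bs by simp
      qed (simp add: bs)
    next
      case False
      hence bp: "0 < b p" using nb[of p] by simp
      have "a (Suc p) * b q * b p = (a (Suc p) * b p) * b q" by simp
      also have "\<dots> \<le> (b (Suc p) * a p) * b q" using adj nb[of q] by (rule mult_right_mono)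
      also have "\<dots> = b (Suc p) * (a p * b q)" by simp
      also have "\<dots> \<le> b (Suc p) * (b p * a q)" using IH nb[of "Suc p"] by (rule mult_left_mono)
      also have "\<dots> = b (Suc p) * a q * b p" by simp
      finally show ?thesis using bp by simp
    qed
  qed
qed

lemma Rord_Uop:
  assumes na: "\<And>k. 0 \<le> a k" and nb: "\<And>k. 0 \<le> b k"
    and da: "\<And>k. a (Suc k) \<le> a k" and db: "\<And>k. b (Suc k) \<le> b k"
    and R: "Rord a b"
  shows "Rord (Uop d a) (Uop d b)"
  unfolding Rord_def
proof
  fix k
  have C: "\<And>p q. q \<le> p \<Longrightarrow> a p * b q \<le> b p * a q"
    using Rord_chain[OF na nb da db R] by blast
  define A1 where "A1 = a (Suc (Suc k)) + a (Suc k) + a k"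
  define A0 where "A0 = a (Suc k) + a k + a (k - 1)"
  define B1 where "B1 = b (Suc (Suc k)) + b (Suc k) + b k"
  define B0 where "B0 = b (Suc k) + b k + b (k - 1)"
  have key: "A1 * B0 \<le> B1 * A0"
  proof (cases k)
    case 0
    have "A1 * B0 = a 2 * b 1 + 2 * a 2 * b 0 + a 1 * b 1 + 2 * a 1 * b 0 + a 0 * b 1 + 2 * a 0 * b 0"
      unfolding A1_def B0_def 0 by (simp add: algebra_simps numeral_2_eq_2)
    moreover have "B1 * A0 = b 2 * a 1 + 2 * b 2 * a 0 + b 1 * a 1 + 2 * b 1 * a 0 + b 0 * a 1 + 2 * b 0 * a 0"
      unfolding B1_def A0_def 0 by (simp add: algebra_simps numeral_2_eq_2)
    moreover have "a 2 * b 1 \<le> b 2 * a 1" "a 2 * b 0 \<le> b 2 * a 0" "a 1 * b 0 \<le> b 1 * a 0"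
      using C by auto
    ultimately show ?thesis by (simp add: algebra_simps)
  next
    case (Suc j)
    have e1: "A1 = a (j+3) + a (j+2) + a (j+1)" unfolding A1_def Suc by (simp add: numeral_3_eq_3 numeral_2_eq_2)
    have e2: "A0 = a (j+2) + a (j+1) + a j" unfolding A0_def Suc by (simp add: numeral_2_eq_2)
    have e3: "B1 = b (j+3) + b (j+2) + b (j+1)" unfolding B1_def Suc by (simp add: numeral_3_eq_3 numeral_2_eq_2)
    have e4: "B0 = b (j+2) + b (j+1) + b j" unfolding B0_def Suc by (simp add: numeral_2_eq_2)
    have "a (j+3) * b (j+2) \<le> b (j+3) * a (j+2)" "a (j+3) * b (j+1) \<le> b (j+3) * a (j+1)"
      "a (j+3) * b j \<le> b (j+3) * a j" "a (j+2) * b (j+1) \<le> b (j+2) * a (j+1)"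
      "a (j+2) * b j \<le> b (j+2) * a j" "a (j+1) * b j \<le> b (j+1) * a j"
      using C by auto
    thus ?thesis unfolding e1 e2 e3 e4 by (simp add: algebra_simps)
  qed
  have nA1: "0 \<le> A1" and nB0: "0 \<le> B0" and nB1: "0 \<le> B1" and nA0: "0 \<le> A0"
    unfolding A1_def B0_def B1_def A0_def using na nb by (simp_all add: add_nonneg_nonneg)
  have "(A1 * B0) ^ d \<le> (B1 * A0) ^ d"
    using key nA1 nB0 by (intro power_mono) simp_all
  thus "Uop d a (Suc k) * Uop d b k \<le> Uop d b (Suc k) * Uop d a k"
    by (simp add: Uop_def A1_def A0_def B1_def B0_def power_mult_distrib)
qed

fun Vs :: "nat \<Rightarrow> nat \<Rightarrow> nat \<Rightarrow> real" where
  "Vs d 0 k = (if k = 0 then 1 else 0)"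
| "Vs d (Suc h) k = Uop d (Vs d h) k"

lemma Vs_Suc_fun: "Vs d (Suc h) = Uop d (Vs d h)"
  by (rule ext) simp

lemma Vs_nonneg: "0 \<le> Vs d h k"
  by (induction h arbitrary: k) (auto intro: Uop_nonneg)

lemma Vs_half: assumes "2 \<le> d" shows "2 * Vs d h (Suc k) \<le> Vs d h k"
  using assms by (induction h arbitrary: k) (auto intro!: Uop_half Vs_nonneg)

lemma Vs_dec: assumes "2 \<le> d" shows "Vs d h (Suc k) \<le> Vs d h k"
  using Vs_half[OF assms, of h k] Vs_nonneg[of d h "Suc k"] by linarith

lemma Vs_pos0: "0 < Vs d h 0"
proof (induction h)
  case 0 then show ?case by simp
next
  case (Suc h)
  have "0 < Vs d h 1 + Vs d h 0 + Vs d h 0" using Suc Vs_nonneg[of d h 1] by linarith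
  thus ?case by (simp add: Uop_def)
qed

lemma Vs_zero: assumes "1 \<le> d" shows "h < k \<Longrightarrow> Vs d h k = 0"
proof (induction h arbitrary: k)
  case 0 then show ?case by simp
next
  case (Suc h)
  have "Vs d h (Suc k) = 0" "Vs d h k = 0" "Vs d h (k - 1) = 0" using Suc by auto
  thus ?case using assms by (simp add: Uop_def)
qed

lemma Vs_R: assumes "2 \<le> d" shows "Rord (Vs d h) (Vs d (Suc h))"
proof (induction h)
  case 0
  show ?case unfolding Rord_def by (auto intro: mult_nonneg_nonneg Vs_nonneg simp del: Vs.simps(2))
next
  case (Suc h)
  show ?case
    using Rord_Uop[OF Vs_nonneg Vs_nonneg Vs_dec[OF assms] Vs_dec[OF assms] Suc, of d]
    by (simp only: Vs_Suc_fun)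
qed

lemma Vs_chain0: assumes "2 \<le> d"
  shows "Vs d h k * Vs d (Suc h) 0 \<le> Vs d (Suc h) k * Vs d h 0"
  using Rord_chain[OF Vs_nonneg Vs_nonneg Vs_dec[OF assms] Vs_dec[OF assms] Vs_R[OF assms], of 0 k h]
  by simp

definition al :: "nat \<Rightarrow> nat \<Rightarrow> nat \<Rightarrow> real" where
  "al d h k = Vs d h k / Vs d h 0"

lemma al_nonneg: "0 \<le> al d h k"
  unfolding al_def using Vs_nonneg Vs_pos0 by simp

lemma al_0 [simp]: "al d h 0 = 1"
  unfolding al_def using Vs_pos0[of d h] by simp

lemma al_mono: assumes "2 \<le> d" shows "al d h k \<le> al d (Suc h) k"
  using Vs_chain0[OF assms, of h k] Vs_pos0[of d h] Vs_pos0[of d "Suc h"]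
  unfolding al_def by (simp add: divide_simps mult.commute)

lemma Vs_geom: assumes "2 \<le> d" shows "Vs d h k \<le> (1/2)^k * Vs d h 0"
proof (induction k)
  case 0 then show ?case by simp
next
  case (Suc k)
  have "Vs d h (Suc k) \<le> (1/2) * Vs d h k" using Vs_half[OF assms, of h k] by simp
  also have "\<dots> \<le> (1/2) * ((1/2)^k * Vs d h 0)" using Suc by simp
  finally show ?case by simp
qed

lemma al_le: assumes "2 \<le> d" shows "al d h k \<le> (1/2)^k"
  using Vs_geom[OF assms, of h k] Vs_pos0[of d h] unfolding al_def by (simp add: divide_simps)

lemma al_incseq: assumes "2 \<le> d" shows "incseq (\<lambda>h. al d h k)"
  using al_mono[OF assms] by (simp add: incseq_SucI)

lemma al_conv: assumes "2 \<le> d" shows "\<exists>L. (\<lambda>h. al d h k) \<longlonglongrightarrow> L"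
proof -
  have "\<forall>i. al d i k \<le> 1"
  proof
    fix i
    have "(1/2::real)^k \<le> 1" by (rule power_le_one) auto
    thus "al d i k \<le> 1" using al_le[OF assms, of i k] by linarith
  qed
  then obtain L where "(\<lambda>h. al d h k) \<longlonglongrightarrow> L" using incseq_convergent[OF al_incseq[OF assms]] by blast
  thus ?thesis by blast
qed

lemma geom_tail: "(\<Sum>k\<in>{M<..n}. (1/2::real)^k) \<le> (1/2)^M"
proof -
  have *: "n \<ge> M \<Longrightarrow> (\<Sum>k\<in>{M<..n}. (1/2::real)^k) \<le> (1/2)^M - (1/2)^n" for n
  proof (induction n)
    case 0 then show ?case by simp
  next
    case (Suc n)
    show ?case
    proof (cases "M = Suc n")
      case True then show ?thesis by simp
    next
      case False
      hence "M \<le> n" using Suc.prems by simp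
      hence "{M<..Suc n} = insert (Suc n) {M<..n}" by auto
      hence "(\<Sum>k\<in>{M<..Suc n}. (1/2::real)^k) = (1/2)^Suc n + (\<Sum>k\<in>{M<..n}. (1/2::real)^k)"
        by simp
      also have "\<dots> \<le> (1/2)^Suc n + ((1/2)^M - (1/2)^n)" using Suc.IH \<open>M \<le> n\<close> by simp
      also have "\<dots> = (1/2)^M - (1/2)^Suc n" by simp
      finally show ?thesis .
    qed
  qed
  show ?thesis
  proof (cases "M \<le> n")
    case True
    have "0 \<le> (1/2::real)^n" by simp
    thus ?thesis using *[OF True] by linarith
  next
    case False
    hence "{M<..n} = {}" by auto
    thus ?thesis by simp
  qed
qed

definition ssum :: "nat \<Rightarrow> nat \<Rightarrow> real" where
  "ssum d m = (\<Sum>k<Suc m. al d m k)"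

lemma ssum_conv: assumes "2 \<le> d" shows "\<exists>L. 1 \<le> L \<and> (\<lambda>m. ssum d m) \<longlonglongrightarrow> L"
proof -
  have inc: "incseq (ssum d)"
  proof (rule incseq_SucI)
    fix m
    have "ssum d m \<le> (\<Sum>k<Suc m. al d (Suc m) k)"
      unfolding ssum_def by (intro sum_mono al_mono[OF assms])
    also have "\<dots> \<le> (\<Sum>k<Suc (Suc m). al d (Suc m) k)"
      by (intro sum_mono2) (auto simp: al_nonneg)
    finally show "ssum d m \<le> ssum d (Suc m)" unfolding ssum_def .
  qed
  have bd: "\<forall>i. ssum d i \<le> 2"
  proof
    fix i
    have e: "{..<Suc i} = insert 0 {0<..i}" by auto
    have "ssum d i = 1 + (\<Sum>k\<in>{0<..i}. al d i k)" unfolding ssum_def e by simp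
    also have "\<dots> \<le> 1 + (\<Sum>k\<in>{0<..i}. (1/2::real)^k)"
      using al_le[OF assms] by (simp add: sum_mono)
    also have "\<dots> \<le> 1 + (1/2)^0" using geom_tail[of 0 i] by simp
    finally show "ssum d i \<le> 2" by simp
  qed
  obtain L where L: "ssum d \<longlonglongrightarrow> L" "\<forall>i. ssum d i \<le> L"
    using incseq_convergent[OF inc bd] by blast
  have "ssum d 0 = 1" unfolding ssum_def by simp
  hence "1 \<le> L" using L(2) by metis
  thus ?thesis using L(1) by blast
qed

definition cr :: "nat \<Rightarrow> nat \<Rightarrow> nat \<Rightarrow> real" where
  "cr d r h = Vs d (h + r) 0 / Vs d h 0 ^ (d ^ r)"

lemma cr_Suc: "cr d (Suc r) h = (al d (h + r) 1 + 2) ^ d * cr d r h ^ d"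
proof -
  have p0: "0 < Vs d (h + r) 0" "0 < Vs d h 0" using Vs_pos0 by auto
  have e1: "Vs d (h + Suc r) 0 = (Vs d (h + r) 1 + 2 * Vs d (h + r) 0) ^ d"
    by (simp add: Uop_def algebra_simps)
  have e2: "al d (h + r) 1 + 2 = (Vs d (h + r) 1 + 2 * Vs d (h + r) 0) / Vs d (h + r) 0"
    unfolding al_def using p0 by (simp add: field_simps)
  have pw: "(Vs d h 0 ^ (d ^ r)) ^ d = Vs d h 0 ^ (d ^ Suc r)"
    by (simp add: power_mult[symmetric] mult.commute)
  have "cr d (Suc r) h = (Vs d (h + r) 1 + 2 * Vs d (h + r) 0) ^ d / (Vs d h 0 ^ (d ^ r)) ^ d"
    unfolding cr_def e1 pw by simp
  also have "\<dots> = ((Vs d (h + r) 1 + 2 * Vs d (h + r) 0) / Vs d (h + r) 0) ^ d * (Vs d (h + r) 0 / Vs d h 0 ^ (d ^ r)) ^ d"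
    using p0 by (simp add: power_divide field_simps)
  finally show ?thesis unfolding e2 cr_def .
qed

lemma cr_conv: assumes "2 \<le> d" shows "\<exists>L. 1 \<le> L \<and> (\<lambda>h. cr d r h) \<longlonglongrightarrow> L"
proof (induction r)
  case 0
  have "\<And>h. cr d 0 h = 1"
  proof -
    fix h have "0 < Vs d h 0" by (rule Vs_pos0)
    thus "cr d 0 h = 1" unfolding cr_def by simp
  qed
  thus ?case by (intro exI[of _ 1]) simp
next
  case (Suc r)
  then obtain L where L: "1 \<le> L" "(\<lambda>h. cr d r h) \<longlonglongrightarrow> L" by blast
  obtain A where A: "(\<lambda>h. al d h 1) \<longlonglongrightarrow> A" using al_conv[OF assms] by blast
  have A0: "0 \<le> A" using A al_nonneg by (metis LIMSEQ_le_const)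
  have "(\<lambda>h. al d (h + r) 1) \<longlonglongrightarrow> A" using LIMSEQ_ignore_initial_segment[OF A] .
  hence "(\<lambda>h. (al d (h + r) 1 + 2) ^ d * cr d r h ^ d) \<longlonglongrightarrow> (A + 2) ^ d * L ^ d"
    by (intro tendsto_intros L(2))
  moreover have "1 \<le> (A + 2) ^ d * L ^ d"
  proof -
    have "1 \<le> (A + 2) ^ d" using A0 by (intro one_le_power) simp
    moreover have "1 \<le> L ^ d" using L(1) by (intro one_le_power)
    ultimately show ?thesis by (metis mult_mono' mult_1 zero_le_one)
  qed
  ultimately show ?case unfolding cr_Suc by blast
qed

lemma mem_tb: "u \<in> tree_ball d n \<longleftrightarrow> set u \<subseteq> {..<d} \<and> length u \<le> n"
  by (simp add: tree_ball_def)

lemma tb_mono: "r \<le> n \<Longrightarrow> tree_ball d r \<subseteq> tree_ball d n"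
  by (auto simp: tree_ball_def)

lemma finite_tb: "finite (tree_ball d n)"
proof -
  have "tree_ball d n = {xs. set xs \<subseteq> {..<d} \<and> length xs \<le> n}" by (simp add: tree_ball_def)
  thus ?thesis by (simp add: finite_lists_length_le)
qed

lemma tb_snoc: "u @ [i] \<in> tree_ball d n \<Longrightarrow> u \<in> tree_ball d n"
  by (auto simp: tree_ball_def)

lemma lip_from_parent:
  assumes "\<And>u i. u @ [i] \<in> tree_ball d n \<Longrightarrow> \<bar>f (u @ [i]) - f u\<bar> \<le> 1"
  shows "\<forall>u\<in>tree_ball d n. \<forall>v\<in>tree_ball d n. tree_adj u v \<longrightarrow> \<bar>f u - f v\<bar> \<le> (1::int)"
proof (intro ballI impI)
  fix u v assume u: "u \<in> tree_ball d n" and v: "v \<in> tree_ball d n" and a: "tree_adj u v"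
  from a consider (c1) i where "v = u @ [i]" | (c2) i where "u = v @ [i]" unfolding tree_adj_def by blast
  thus "\<bar>f u - f v\<bar> \<le> 1"
  proof cases
    case c1 thus ?thesis using assms[of u i] v by (simp add: abs_minus_commute)
  next
    case c2 thus ?thesis using assms[of v i] u by simp
  qed
qed

lemma tree_adj_append: "tree_adj (v @ w) (v @ w') \<longleftrightarrow> tree_adj w w'"
  unfolding tree_adj_def by auto

lemma lip01_D:
  assumes "f \<in> lip01 d n"
  shows "\<And>u v. u \<in> tree_ball d n \<Longrightarrow> v \<in> tree_ball d n \<Longrightarrow> tree_adj u v \<Longrightarrow> \<bar>f u - f v\<bar> \<le> 1"
    and "\<And>u. u \<in> tree_ball d n \<Longrightarrow> length u = n \<Longrightarrow> f u \<in> {0, 1}"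
    and "\<And>u. u \<notin> tree_ball d n \<Longrightarrow> f u = 0"
  using assms unfolding lip01_def by blast+

lemma lip01_snoc:
  assumes "f \<in> lip01 d n" "u @ [i] \<in> tree_ball d n"
  shows "\<bar>f (u @ [i]) - f u\<bar> \<le> 1"
  using lip01_D(1)[OF assms(1) assms(2) tb_snoc[OF assms(2)]] by (simp add: tree_adj_def)

lemma lip01_path:
  assumes "f \<in> lip01 d n"
  shows "u \<in> tree_ball d n \<Longrightarrow> \<bar>f u - f []\<bar> \<le> int (length u)"
proof (induction u rule: rev_induct)
  case Nil then show ?case by simp
next
  case (snoc i u)
  have "\<bar>f (u @ [i]) - f u\<bar> \<le> 1" using lip01_snoc[OF assms snoc.prems] .
  moreover have "\<bar>f u - f []\<bar> \<le> int (length u)" using snoc.IH tb_snoc[OF snoc.prems] by simp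
  ultimately show ?case by simp
qed

lemma finite_box:
  assumes "finite A" "finite S"
  shows "finite {g :: 'a \<Rightarrow> 'b::zero. (\<forall>v. v \<notin> A \<longrightarrow> g v = 0) \<and> (\<forall>v\<in>A. g v \<in> S)}"
proof -
  have "{g :: 'a \<Rightarrow> 'b. (\<forall>v. v \<notin> A \<longrightarrow> g v = 0) \<and> (\<forall>v\<in>A. g v \<in> S)}
        \<subseteq> (\<lambda>h v. if v \<in> A then h v else 0) ` (PiE A (\<lambda>_. S))"
  proof
    fix g :: "'a \<Rightarrow> 'b" assume g: "g \<in> {g. (\<forall>v. v \<notin> A \<longrightarrow> g v = 0) \<and> (\<forall>v\<in>A. g v \<in> S)}"
    have "g = (\<lambda>v. if v \<in> A then restrict g A v else 0)" using g by (auto simp: fun_eq_iff)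
    moreover have "restrict g A \<in> PiE A (\<lambda>_. S)" using g by auto
    ultimately show "g \<in> (\<lambda>h v. if v \<in> A then h v else 0) ` (PiE A (\<lambda>_. S))" by blast
  qed
  moreover have "finite ((\<lambda>h v. if v \<in> A then h v else 0) ` (PiE A (\<lambda>_. S)))"
    using assms by (intro finite_imageI finite_PiE) auto
  ultimately show ?thesis by (rule finite_subset)
qed

lemma lip01_root_bound:
  assumes "1 \<le> d" "f \<in> lip01 d n"
  shows "\<bar>f []\<bar> \<le> int n + 1"
proof -
  have l: "replicate n 0 \<in> tree_ball d n" using assms(1) by (auto simp: tree_ball_def)
  have "f (replicate n 0) \<in> {0, 1}" using lip01_D(2)[OF assms(2) l] by simp
  moreover have "\<bar>f (replicate n 0) - f []\<bar> \<le> int n" using lip01_path[OF assms(2) l] by simp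
  ultimately show ?thesis by auto
qed

lemma finite_lip01:
  assumes "1 \<le> d" shows "finite (lip01 d n)"
proof -
  have "lip01 d n \<subseteq> {g. (\<forall>v. v \<notin> tree_ball d n \<longrightarrow> g v = 0) \<and> (\<forall>v\<in>tree_ball d n. g v \<in> {-(2 * int n + 1)..2 * int n + 1})}"
  proof safe
    fix f v assume f: "f \<in> lip01 d n"
    { assume "v \<notin> tree_ball d n" thus "f v = 0" using lip01_D(3)[OF f] by simp }
    { assume v: "v \<in> tree_ball d n"
      have "\<bar>f v - f []\<bar> \<le> int (length v)" using lip01_path[OF f v] .
      moreover have "length v \<le> n" using v by (simp add: tree_ball_def)
      moreover have "\<bar>f []\<bar> \<le> int n + 1" using lip01_root_bound[OF assms f] .
      ultimately show "f v \<in> {-(2 * int n + 1)..2 * int n + 1}" by auto }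
  qed
  thus ?thesis by (rule finite_subset[OF _ finite_box[OF finite_tb]]) simp
qed

lemma zero_in_lip01: "(\<lambda>_. 0) \<in> lip01 d n"
  by (simp add: lip01_def)

lemma lip01_ne: "lip01 d n \<noteq> {}"
  using zero_in_lip01 by blast

definition LipB :: "nat \<Rightarrow> nat \<Rightarrow> (nat list \<Rightarrow> int) \<Rightarrow> bool" where
  "LipB d r g \<longleftrightarrow> (\<forall>u\<in>tree_ball d r. \<forall>v\<in>tree_ball d r. tree_adj u v \<longrightarrow> \<bar>g u - g v\<bar> \<le> 1)
                 \<and> (\<forall>u. u \<notin> tree_ball d r \<longrightarrow> g u = 0)"

definition LB :: "nat \<Rightarrow> nat \<Rightarrow> int \<Rightarrow> (nat list \<Rightarrow> int) set" where
  "LB d h y = {f \<in> lip01 d h. f [] = y}"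

definition leaves :: "nat \<Rightarrow> nat \<Rightarrow> nat list set" where
  "leaves d r = {v. set v \<subseteq> {..<d} \<and> length v = r}"

definition fib :: "nat \<Rightarrow> nat \<Rightarrow> nat \<Rightarrow> (nat list \<Rightarrow> int) \<Rightarrow> (nat list \<Rightarrow> int) set" where
  "fib d n r g = {f \<in> lip01 d n. restr_ball d r f = g}"

definition Phi :: "nat \<Rightarrow> nat \<Rightarrow> nat \<Rightarrow> (nat list \<Rightarrow> int) \<Rightarrow> nat list \<Rightarrow> nat list \<Rightarrow> int" where
  "Phi d n r f = restrict (\<lambda>v w. if w \<in> tree_ball d (n - r) then f (v @ w) else 0) (leaves d r)"

definition Psi :: "nat \<Rightarrow> nat \<Rightarrow> nat \<Rightarrow> (nat list \<Rightarrow> int) \<Rightarrow> (nat list \<Rightarrow> nat list \<Rightarrow> int) \<Rightarrow> nat list \<Rightarrow> int" where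
  "Psi d n r g F = (\<lambda>u. if u \<in> tree_ball d r then g u else if u \<in> tree_ball d n then F (take r u) (drop r u) else 0)"

lemma finite_leaves: "finite (leaves d r)"
  unfolding leaves_def by (simp add: finite_lists_length_eq)

lemma card_leaves: "card (leaves d r) = d ^ r"
  unfolding leaves_def using card_lists_length_eq[of "{..<d}" r] by simp

lemma leaves_tb: "v \<in> leaves d r \<Longrightarrow> v \<in> tree_ball d r"
  by (simp add: leaves_def tree_ball_def)

lemma fib_lemma:
  assumes rn: "r \<le> n" and g: "LipB d r g"
  shows "bij_betw (Phi d n r) (fib d n r g) (PiE (leaves d r) (\<lambda>v. LB d (n - r) (g v)))"
proof (rule bij_betw_byWitness[where f' = "Psi d n r g"])
  have gL: "\<And>u v. u \<in> tree_ball d r \<Longrightarrow> v \<in> tree_ball d r \<Longrightarrow> tree_adj u v \<Longrightarrow> \<bar>g u - g v\<bar> \<le> 1"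
    and g0: "\<And>u. u \<notin> tree_ball d r \<Longrightarrow> g u = 0" using g unfolding LipB_def by blast+
  show "\<forall>f\<in>fib d n r g. Psi d n r g (Phi d n r f) = f"
  proof
    fix f assume "f \<in> fib d n r g"
    hence f: "f \<in> lip01 d n" and fr: "restr_ball d r f = g" by (auto simp: fib_def)
    show "Psi d n r g (Phi d n r f) = f"
    proof
      fix u
      show "Psi d n r g (Phi d n r f) u = f u"
      proof (cases "u \<in> tree_ball d r")
        case True
        then show ?thesis by (simp add: Psi_def fr[symmetric] restr_ball_def)
      next
        case False
        show ?thesis
        proof (cases "u \<in> tree_ball d n")
          case True
          have lu: "r < length u" "length u \<le> n" "set u \<subseteq> {..<d}" using True False by (auto simp: tree_ball_def)
          have tl: "take r u \<in> leaves d r" using lu by (auto simp: leaves_def dest: in_set_takeD)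
          have dr: "drop r u \<in> tree_ball d (n - r)" using lu by (auto simp: tree_ball_def dest: in_set_dropD)
          show ?thesis using False True tl dr by (simp add: Psi_def Phi_def)
        next
          case F2: False
          thus ?thesis using False lip01_D(3)[OF f] by (simp add: Psi_def)
        qed
      qed
    qed
  qed
  show "\<forall>F\<in>PiE (leaves d r) (\<lambda>v. LB d (n - r) (g v)). Phi d n r (Psi d n r g F) = F"
  proof
    fix F assume F: "F \<in> PiE (leaves d r) (\<lambda>v. LB d (n - r) (g v))"
    show "Phi d n r (Psi d n r g F) = F"
    proof
      fix v
      show "Phi d n r (Psi d n r g F) v = F v"
      proof (cases "v \<in> leaves d r")
        case False thus ?thesis using F by (simp add: Phi_def PiE_def extensional_def)
      next
        case True
        have Fv: "F v \<in> lip01 d (n - r)" "F v [] = g v" using F True by (auto simp: LB_def)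
        have lv: "length v = r" "set v \<subseteq> {..<d}" using True by (auto simp: leaves_def)
        show ?thesis
        proof
          fix w
          show "Phi d n r (Psi d n r g F) v w = F v w"
          proof (cases "w \<in> tree_ball d (n - r)")
            case False thus ?thesis using True lip01_D(3)[OF Fv(1)] by (simp add: Phi_def)
          next
            case wT: True
            have vwn: "v @ w \<in> tree_ball d n" using wT lv rn by (auto simp: tree_ball_def)
            show ?thesis
            proof (cases "w = []")
              case True thus ?thesis using wT \<open>v \<in> leaves d r\<close> leaves_tb Fv(2) by (simp add: Phi_def Psi_def)
            next
              case False
              hence "v @ w \<notin> tree_ball d r" using lv by (auto simp: tree_ball_def)
              thus ?thesis using wT vwn \<open>v \<in> leaves d r\<close> lv by (simp add: Phi_def Psi_def)
            qed
          qed
        qed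
      qed
    qed
  qed
  show "Phi d n r ` fib d n r g \<subseteq> PiE (leaves d r) (\<lambda>v. LB d (n - r) (g v))"
  proof
    fix F assume "F \<in> Phi d n r ` fib d n r g"
    then obtain f where "f \<in> fib d n r g" and FF: "F = Phi d n r f" by blast
    hence f: "f \<in> lip01 d n" and fr: "restr_ball d r f = g" by (auto simp: fib_def)
    have "Phi d n r f v \<in> LB d (n - r) (g v)" if v: "v \<in> leaves d r" for v
    proof -
      have lv: "length v = r" "set v \<subseteq> {..<d}" using v by (auto simp: leaves_def)
      have inn: "w \<in> tree_ball d (n - r) \<Longrightarrow> v @ w \<in> tree_ball d n" for w
        using lv rn by (auto simp: tree_ball_def)
      have e: "Phi d n r f v = (\<lambda>w. if w \<in> tree_ball d (n - r) then f (v @ w) else 0)"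
        using v by (simp add: Phi_def)
      have "(\<lambda>w. if w \<in> tree_ball d (n - r) then f (v @ w) else 0) \<in> lip01 d (n - r)"
        unfolding lip01_def
      proof (intro CollectI conjI ballI impI allI)
        fix a b assume a: "a \<in> tree_ball d (n - r)" and b: "b \<in> tree_ball d (n - r)" and ab: "tree_adj a b"
        show "\<bar>(if a \<in> tree_ball d (n - r) then f (v @ a) else 0) - (if b \<in> tree_ball d (n - r) then f (v @ b) else 0)\<bar> \<le> 1"
          using a b lip01_D(1)[OF f inn[OF a] inn[OF b]] ab by (simp add: tree_adj_append)
      next
        fix a assume a: "a \<in> tree_ball d (n - r)" and la: "length a = n - r"
        show "(if a \<in> tree_ball d (n - r) then f (v @ a) else 0) \<in> {0, 1}"
          using a la lip01_D(2)[OF f inn[OF a]] lv rn by simp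
      qed simp
      moreover have "f v = g v" using leaves_tb[OF v] by (simp add: fr[symmetric] restr_ball_def)
      ultimately show ?thesis unfolding e LB_def using rn by (simp add: tree_ball_def)
    qed
    moreover have "Phi d n r f \<in> extensional (leaves d r)" by (simp add: Phi_def)
    ultimately show "F \<in> PiE (leaves d r) (\<lambda>v. LB d (n - r) (g v))" using FF by (auto simp: PiE_def)
  qed
  show "Psi d n r g ` PiE (leaves d r) (\<lambda>v. LB d (n - r) (g v)) \<subseteq> fib d n r g"
  proof
    fix f assume "f \<in> Psi d n r g ` PiE (leaves d r) (\<lambda>v. LB d (n - r) (g v))"
    then obtain F where F: "F \<in> PiE (leaves d r) (\<lambda>v. LB d (n - r) (g v))" and ff: "f = Psi d n r g F" by blast
    have FL: "\<And>v. v \<in> leaves d r \<Longrightarrow> F v \<in> lip01 d (n - r)" and Fr: "\<And>v. v \<in> leaves d r \<Longrightarrow> F v [] = g v"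
      using F by (auto simp: LB_def)
    have tk: "take r u \<in> leaves d r" "drop r u \<in> tree_ball d (n - r)"
      if "u \<in> tree_ball d n" "u \<notin> tree_ball d r" for u
      using that by (auto simp: leaves_def tree_ball_def dest: in_set_takeD in_set_dropD)
    have lipf: "\<bar>f (u @ [i]) - f u\<bar> \<le> 1" if ui: "u @ [i] \<in> tree_ball d n" for u i
    proof -
      have un: "u \<in> tree_ball d n" using tb_snoc[OF ui] .
      show ?thesis
      proof (cases "u @ [i] \<in> tree_ball d r")
        case True
        hence "u \<in> tree_ball d r" by (rule tb_snoc)
        thus ?thesis using True gL[of "u @ [i]" u] ff by (simp add: Psi_def tree_adj_def)
      next
        case uiF: False
        show ?thesis
        proof (cases "u \<in> tree_ball d r")
          case True
          have lu: "length u = r" "set u \<subseteq> {..<d}" "i < d" "r < n"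
            using True uiF ui by (auto simp: tree_ball_def)
          have ul: "u \<in> leaves d r" using lu by (simp add: leaves_def)
          have "\<bar>F u [i] - F u []\<bar> \<le> 1"
            using lip01_D(1)[OF FL[OF ul], of "[i]" "[]"] lu by (auto simp: tree_ball_def tree_adj_def)
          thus ?thesis using True uiF ui lu Fr[OF ul] ff by (simp add: Psi_def)
        next
          case False
          have lu: "r < length u" "set u \<subseteq> {..<d}" "i < d" "length u < n"
            using False un ui by (auto simp: tree_ball_def)
          have e1: "take r (u @ [i]) = take r u" "drop r (u @ [i]) = drop r u @ [i]" using lu by auto
          have a1: "drop r u @ [i] \<in> tree_ball d (n - r)" using lu
            by (auto simp: tree_ball_def dest: in_set_dropD)
          have "\<bar>F (take r u) (drop r u @ [i]) - F (take r u) (drop r u)\<bar> \<le> 1"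
            using lip01_snoc[OF FL[OF tk(1)[OF un False]] a1] .
          thus ?thesis using False uiF ui un e1 ff by (simp add: Psi_def)
        qed
      qed
    qed
    have "f \<in> lip01 d n"
      unfolding lip01_def
    proof (intro CollectI conjI)
      show "\<forall>u\<in>tree_ball d n. \<forall>v\<in>tree_ball d n. tree_adj u v \<longrightarrow> \<bar>f u - f v\<bar> \<le> 1"
        using lip_from_parent[of d n f] lipf by blast
      show "\<forall>u\<in>tree_ball d n. length u = n \<longrightarrow> f u \<in> {0, 1}"
      proof (intro ballI impI)
        fix u assume u: "u \<in> tree_ball d n" and lu: "length u = n"
        show "f u \<in> {0, 1}"
        proof (cases "u \<in> tree_ball d r")
          case True
          hence "r = n" "u \<in> leaves d r" using lu rn u by (auto simp: tree_ball_def leaves_def)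
          hence "F u [] \<in> {0, 1}" using lip01_D(2)[OF FL, of u "[]"] by (simp add: tree_ball_def)
          thus ?thesis using Fr[OF \<open>u \<in> leaves d r\<close>] True ff by (simp add: Psi_def)
        next
          case False
          have "F (take r u) (drop r u) \<in> {0, 1}"
            using lip01_D(2)[OF FL[OF tk(1)[OF u False]] tk(2)[OF u False]] lu by simp
          thus ?thesis using False u ff by (simp add: Psi_def)
        qed
      qed
      show "\<forall>u. u \<notin> tree_ball d n \<longrightarrow> f u = 0"
        using tb_mono[OF rn] ff by (auto simp: Psi_def)
    qed
    moreover have "restr_ball d r f = g"
      using g0 ff by (auto simp: restr_ball_def Psi_def fun_eq_iff)
    ultimately show "f \<in> fib d n r g" by (simp add: fib_def)
  qed
qed

lemma card_fib:
  assumes "r \<le> n" "LipB d r g"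
  shows "card (fib d n r g) = (\<Prod>v\<in>leaves d r. card (LB d (n - r) (g v)))"
  using bij_betw_same_card[OF fib_lemma[OF assms]] card_PiE[OF finite_leaves] by simp

lemma fib_empty:
  assumes "r \<le> n" "\<not> LipB d r g"
  shows "fib d n r g = {}"
proof (rule ccontr)
  assume "fib d n r g \<noteq> {}"
  then obtain f where f: "f \<in> lip01 d n" and fr: "restr_ball d r f = g" by (auto simp: fib_def)
  have "LipB d r g" unfolding LipB_def
  proof (intro conjI ballI impI allI)
    fix u v assume u: "u \<in> tree_ball d r" and v: "v \<in> tree_ball d r" and "tree_adj u v"
    moreover have "u \<in> tree_ball d n" "v \<in> tree_ball d n" using u v tb_mono[OF assms(1)] by auto
    ultimately show "\<bar>g u - g v\<bar> \<le> 1" using lip01_D(1)[OF f, of u v] u v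
      by (simp add: fr[symmetric] restr_ball_def)
  next
    fix u assume "u \<notin> tree_ball d r" thus "g u = 0" using fr by (auto simp: restr_ball_def)
  qed
  thus False using assms(2) by simp
qed

lemma tb1: "u \<in> tree_ball d 1 \<longleftrightarrow> u = [] \<or> (\<exists>i<d. u = [i])"
  by (cases u) (auto simp: tree_ball_def)

lemma tb1': "u \<in> tree_ball d (Suc 0) \<longleftrightarrow> u = [] \<or> (\<exists>i<d. u = [i])"
  by (cases u) (auto simp: tree_ball_def)

lemma leaves1: "leaves d 1 = (\<lambda>i. [i]) ` {..<d}"
  by (auto simp: leaves_def length_Suc_conv)

lemma LB0: "LB d 0 y = (if y \<in> {0, 1} then {\<lambda>u. if u = [] then y else 0} else {})"
proof -
  have tb0: "tree_ball d 0 = {[]}" by (auto simp: tree_ball_def)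
  have "f \<in> LB d 0 y \<longleftrightarrow> y \<in> {0, 1} \<and> f = (\<lambda>u. if u = [] then y else 0)" for f
  proof
    assume f: "f \<in> LB d 0 y"
    hence "f [] = y" "f \<in> lip01 d 0" by (auto simp: LB_def)
    hence "y \<in> {0, 1}" "\<And>u. u \<noteq> [] \<Longrightarrow> f u = 0" by (auto simp: lip01_def tb0)
    thus "y \<in> {0, 1} \<and> f = (\<lambda>u. if u = [] then y else 0)" using \<open>f [] = y\<close> by auto
  next
    assume "y \<in> {0, 1} \<and> f = (\<lambda>u. if u = [] then y else 0)"
    thus "f \<in> LB d 0 y" by (auto simp: LB_def lip01_def tb0 tree_adj_def)
  qed
  thus ?thesis by (intro set_eqI) simp
qed

lemma card_LB0: "card (LB d 0 y) = (if y \<in> {0, 1} then 1 else 0)"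
  by (simp add: LB0)

definition Gs :: "nat \<Rightarrow> int \<Rightarrow> (nat list \<Rightarrow> int) set" where
  "Gs d x = {g. LipB d 1 g \<and> g [] = x}"

lemma LB_Suc_UN: "LB d (Suc h) x = (\<Union>g\<in>Gs d x. fib d (Suc h) 1 g)"
proof
  show "LB d (Suc h) x \<subseteq> (\<Union>g\<in>Gs d x. fib d (Suc h) 1 g)"
  proof
    fix f assume f: "f \<in> LB d (Suc h) x"
    have ff: "f \<in> fib d (Suc h) 1 (restr_ball d 1 f)" using f by (simp add: fib_def LB_def)
    hence "LipB d 1 (restr_ball d 1 f)" using fib_empty[of 1 "Suc h" d] by auto
    moreover have "restr_ball d 1 f [] = x" using f by (simp add: restr_ball_def LB_def tree_ball_def)
    ultimately show "f \<in> (\<Union>g\<in>Gs d x. fib d (Suc h) 1 g)" using ff by (auto simp: Gs_def)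
  qed
next
  show "(\<Union>g\<in>Gs d x. fib d (Suc h) 1 g) \<subseteq> LB d (Suc h) x"
  proof
    fix f assume "f \<in> (\<Union>g\<in>Gs d x. fib d (Suc h) 1 g)"
    then obtain g where g: "g \<in> Gs d x" "f \<in> fib d (Suc h) 1 g" by blast
    have "f [] = restr_ball d 1 f []" by (simp add: restr_ball_def tree_ball_def)
    hence "f [] = x" using g by (simp add: fib_def Gs_def)
    thus "f \<in> LB d (Suc h) x" using g by (simp add: fib_def LB_def)
  qed
qed

lemma Gs_sub: "Gs d x \<subseteq> {g. (\<forall>v. v \<notin> tree_ball d 1 \<longrightarrow> g v = 0) \<and> (\<forall>v\<in>tree_ball d 1. g v \<in> {x-1..x+1})}"
proof safe
  fix g v assume g: "g \<in> Gs d x"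
  { assume "v \<notin> tree_ball d 1" thus "g v = 0" using g by (simp add: Gs_def LipB_def) }
  { assume v: "v \<in> tree_ball d 1"
    show "g v \<in> {x-1..x+1}"
    proof (cases "v = []")
      case True thus ?thesis using g by (simp add: Gs_def)
    next
      case False
      then obtain i where i: "i < d" "v = [i]" using v tb1 by blast
      have "[] \<in> tree_ball d 1" "[i] \<in> tree_ball d 1" "tree_adj [] [i]"
        using i by (auto simp: tb1 tb1' tree_adj_def)
      hence "\<bar>g [] - g [i]\<bar> \<le> 1" using g unfolding Gs_def LipB_def by blast
      thus ?thesis using g i by (auto simp: Gs_def)
    qed }
qed

lemma finite_Gs: "finite (Gs d x)"
  by (rule finite_subset[OF Gs_sub finite_box[OF finite_tb]]) simp

lemma int_three: "{x-1..x+1::int} = {x-1, x, x+1}"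
proof
  show "{x-1..x+1::int} \<subseteq> {x-1, x, x+1}"
  proof
    fix z assume "z \<in> {x-1..x+1::int}"
    hence "x - 1 \<le> z" "z \<le> x + 1" by auto
    hence "z = x - 1 \<or> z = x \<or> z = x + 1" by presburger
    thus "z \<in> {x-1, x, x+1}" by blast
  qed
qed auto

lemma Gs_bij: "bij_betw (\<lambda>g. restrict (\<lambda>i. g [i]) {..<d}) (Gs d x) (PiE {..<d} (\<lambda>_. {x-1, x, x+1}))"
proof (rule bij_betw_byWitness[where f' = "\<lambda>c u. if u = [] then x else if u \<in> tree_ball d 1 then c (hd u) else 0"])
  show "\<forall>g\<in>Gs d x. (\<lambda>u. if u = [] then x else if u \<in> tree_ball d 1 then restrict (\<lambda>i. g [i]) {..<d} (hd u) else 0) = g"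
  proof
    fix g assume g: "g \<in> Gs d x"
    show "(\<lambda>u. if u = [] then x else if u \<in> tree_ball d 1 then restrict (\<lambda>i. g [i]) {..<d} (hd u) else 0) = g"
    proof
      fix u
      show "(if u = [] then x else if u \<in> tree_ball d 1 then restrict (\<lambda>i. g [i]) {..<d} (hd u) else 0) = g u"
      proof (cases "u \<in> tree_ball d 1")
        case True
        then consider "u = []" | i where "i < d" "u = [i]" unfolding tb1 by blast
        thus ?thesis
        proof cases
          case 1 thus ?thesis using g by (simp add: Gs_def)
        next
          case (2 i)
          have "[i] \<in> tree_ball d 1" using 2 by (simp add: tb1 tb1')
          thus ?thesis using 2 by simp
        qed
      next
        case False
        thus ?thesis using g by (auto simp: Gs_def LipB_def)
      qed
    qed
  qed
  show "\<forall>c\<in>PiE {..<d} (\<lambda>_. {x-1, x, x+1}). restrict (\<lambda>i. (if [i] = [] then x else if [i] \<in> tree_ball d 1 then c (hd [i]) else 0)) {..<d} = c"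
  proof
    fix c assume c: "c \<in> PiE {..<d} (\<lambda>_. {x-1, x, x+1})"
    show "restrict (\<lambda>i. (if [i] = [] then x else if [i] \<in> tree_ball d 1 then c (hd [i]) else 0)) {..<d} = c"
    proof
      fix i
      show "restrict (\<lambda>i. (if [i] = [] then x else if [i] \<in> tree_ball d 1 then c (hd [i]) else 0)) {..<d} i = c i"
      proof (cases "i < d")
        case True
        have "[i] \<in> tree_ball d 1" using True by (simp add: tb1 tb1')
        thus ?thesis using True by simp
      next
        case False
        thus ?thesis using c by (simp add: PiE_def extensional_def)
      qed
    qed
  qed
  show "(\<lambda>g. restrict (\<lambda>i. g [i]) {..<d}) ` Gs d x \<subseteq> PiE {..<d} (\<lambda>_. {x-1, x, x+1})"
  proof
    fix c assume "c \<in> (\<lambda>g. restrict (\<lambda>i. g [i]) {..<d}) ` Gs d x"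
    then obtain g where g: "g \<in> Gs d x" and cg: "c = restrict (\<lambda>i. g [i]) {..<d}" by blast
    have "g [i] \<in> {x-1..x+1}" if "i < d" for i
    proof -
      have "[i] \<in> tree_ball d 1" using that by (simp add: tb1 tb1')
      thus ?thesis using subsetD[OF Gs_sub g] by blast
    qed
    hence "g [i] \<in> {x-1, x, x+1}" if "i < d" for i using that int_three by blast
    thus "c \<in> PiE {..<d} (\<lambda>_. {x-1, x, x+1})" unfolding cg restrict_PiE_iff by blast
  qed
  show "(\<lambda>c u. if u = [] then x else if u \<in> tree_ball d 1 then c (hd u) else 0) ` PiE {..<d} (\<lambda>_. {x-1, x, x+1}) \<subseteq> Gs d x"
  proof
    fix g assume "g \<in> (\<lambda>c u. if u = [] then x else if u \<in> tree_ball d 1 then c (hd u) else 0) ` PiE {..<d} (\<lambda>_. {x-1, x, x+1})"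
    then obtain c where c: "c \<in> PiE {..<d} (\<lambda>_. {x-1, x, x+1})"
      and gc: "g = (\<lambda>u. if u = [] then x else if u \<in> tree_ball d 1 then c (hd u) else 0)" by blast
    have ci: "\<bar>c i - x\<bar> \<le> 1" if "i < d" for i
    proof -
      have "c i \<in> {x-1, x, x+1}" using PiE_mem[OF c] that by blast
      hence "c i = x - 1 \<or> c i = x \<or> c i = x + 1" by blast
      thus ?thesis by linarith
    qed
    have "LipB d 1 g" unfolding LipB_def
    proof (intro conjI ballI impI allI)
      fix u v assume u: "u \<in> tree_ball d 1" and v: "v \<in> tree_ball d 1" and a: "tree_adj u v"
      have gs: "g [] = x" "\<And>j. j < d \<Longrightarrow> g [j] = c j" using gc by (auto simp: tb1 tb1')
      from a consider (c1) j where "v = u @ [j]" | (c2) j where "u = v @ [j]" unfolding tree_adj_def by blast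
      thus "\<bar>g u - g v\<bar> \<le> 1"
      proof cases
        case c1
        hence "u = []" "j < d" using v by (auto simp: tree_ball_def)
        thus ?thesis using c1 gs ci[of j] by (simp add: abs_minus_commute)
      next
        case c2
        hence "v = []" "j < d" using u by (auto simp: tree_ball_def)
        thus ?thesis using c2 gs ci[of j] by simp
      qed
    next
      fix u assume "u \<notin> tree_ball d 1" thus "g u = 0" using gc by (auto simp: tree_ball_def)
    qed
    thus "g \<in> Gs d x" using gc by (simp add: Gs_def)
  qed
qed

lemma card_LB_Suc:
  assumes d1: "1 \<le> d"
  shows "card (LB d (Suc h) x) = (card (LB d h (x-1)) + card (LB d h x) + card (LB d h (x+1))) ^ d"
proof -
  define \<phi> where "\<phi> y = card (LB d h y)" for y
  have finfib: "finite (fib d (Suc h) 1 g)" for g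
  proof -
    have "fib d (Suc h) 1 g \<subseteq> lip01 d (Suc h)" by (auto simp: fib_def)
    thus ?thesis using finite_lip01[OF d1] finite_subset by blast
  qed
  have "card (LB d (Suc h) x) = (\<Sum>g\<in>Gs d x. card (fib d (Suc h) 1 g))"
    unfolding LB_Suc_UN
  proof (rule card_UN_disjoint[OF finite_Gs])
    show "\<forall>g\<in>Gs d x. finite (fib d (Suc h) 1 g)" using finfib by blast
    show "\<forall>g\<in>Gs d x. \<forall>j\<in>Gs d x. g \<noteq> j \<longrightarrow> fib d (Suc h) 1 g \<inter> fib d (Suc h) 1 j = {}"
      by (auto simp: fib_def)
  qed
  also have "\<dots> = (\<Sum>g\<in>Gs d x. \<Prod>i<d. \<phi> (g [i]))"
  proof (rule sum.cong[OF refl])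
    fix g assume g: "g \<in> Gs d x"
    have "card (fib d (Suc h) 1 g) = (\<Prod>v\<in>leaves d 1. \<phi> (g v))"
      using card_fib[of 1 "Suc h" d g] g by (simp add: Gs_def \<phi>_def)
    also have "\<dots> = (\<Prod>i<d. \<phi> (g [i]))" unfolding leaves1
      by (subst prod.reindex) (auto simp: inj_on_def)
    finally show "card (fib d (Suc h) 1 g) = (\<Prod>i<d. \<phi> (g [i]))" .
  qed
  also have "\<dots> = (\<Sum>c\<in>PiE {..<d} (\<lambda>_. {x-1, x, x+1}). \<Prod>i<d. \<phi> (c i))"
  proof -
    have "(\<Sum>g\<in>Gs d x. \<Prod>i<d. \<phi> (g [i])) = (\<Sum>g\<in>Gs d x. (\<lambda>c. \<Prod>i<d. \<phi> (c i)) (restrict (\<lambda>i. g [i]) {..<d}))"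
      by (intro sum.cong refl prod.cong) auto
    also have "\<dots> = (\<Sum>c\<in>PiE {..<d} (\<lambda>_. {x-1, x, x+1}). \<Prod>i<d. \<phi> (c i))"
      by (rule sum.reindex_bij_betw[OF Gs_bij])
    finally show ?thesis .
  qed
  also have "\<dots> = (\<Prod>i<d. \<Sum>y\<in>{x-1, x, x+1}. \<phi> y)"
    by (rule prod_sum_PiE[symmetric]) auto
  also have "\<dots> = (\<phi> (x-1) + \<phi> x + \<phi> (x+1)) ^ d"
    by (simp add: add.assoc)
  finally show ?thesis unfolding \<phi>_def .
qed

definition kap :: "int \<Rightarrow> nat" where
  "kap y = (if y \<le> 0 then nat (- y) else nat (y - 1))"

lemma card_LB_Vs:
  assumes d1: "1 \<le> d"
  shows "real (card (LB d h y)) = Vs d h (kap y)"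
proof (induction h arbitrary: y)
  case 0
  show ?case by (simp add: card_LB0 kap_def)
next
  case (Suc h)
  have "real (card (LB d (Suc h) y)) = (Vs d h (kap (y-1)) + Vs d h (kap y) + Vs d h (kap (y+1))) ^ d"
    unfolding card_LB_Suc[OF d1] using Suc.IH by simp
  also have "\<dots> = Vs d (Suc h) (kap y)"
  proof (cases "y \<le> 0")
    case True
    have "kap (y-1) = Suc (kap y)" "kap (y+1) = kap y - 1" using True unfolding kap_def by (simp split: if_splits; arith)+
    thus ?thesis by (simp add: Uop_def algebra_simps)
  next
    case False
    have "kap (y+1) = Suc (kap y)" "kap (y-1) = kap y - 1" using False unfolding kap_def by (simp split: if_splits; arith)+
    thus ?thesis by (simp add: Uop_def algebra_simps)
  qed
  finally show ?case .
qed

lemma pmf_limit_exists: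
  fixes P :: "nat \<Rightarrow> 'a pmf" and q :: "'a \<Rightarrow> real"
  assumes lim: "\<And>g. (\<lambda>n. pmf (P n) g) \<longlonglongrightarrow> q g"
    and tight: "\<And>M::nat. \<exists>F N. finite F \<and> (\<forall>n\<ge>N. 1 - (1/2)^M \<le> measure_pmf.prob (P n) F)"
  shows "\<exists>p. \<forall>g. pmf p g = q g"
proof -
  have q0: "0 \<le> q g" for g
    using lim[of g] by (rule LIMSEQ_le_const) auto
  have sF: "(\<lambda>n. measure_pmf.prob (P n) F) \<longlonglongrightarrow> sum q F" if "finite F" for F
  proof -
    have "(\<lambda>n. sum (pmf (P n)) F) \<longlonglongrightarrow> sum q F" by (intro tendsto_sum lim)
    thus ?thesis using measure_measure_pmf_finite[OF that] by simp
  qed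
  have le1: "sum q F \<le> 1" if "finite F" for F
    using sF[OF that] by (rule LIMSEQ_le_const2) (auto intro: measure_pmf.prob_le_1)
  have summ: "q summable_on UNIV"
    by (rule nonneg_bdd_above_summable_on) (use q0 le1 in \<open>auto simp: bdd_above_def\<close>)
  have inf_le: "infsum q UNIV \<le> 1"
    by (rule infsum_le_finite_sums[OF summ]) (use le1 in auto)
  have inf_ge: "1 - (1/2)^M \<le> infsum q UNIV" for M :: nat
  proof -
    obtain F N where F: "finite F" "\<forall>n\<ge>N. 1 - (1/2)^M \<le> measure_pmf.prob (P n) F"
      using tight[of M] by blast
    have "1 - (1/2)^M \<le> sum q F" using sF[OF F(1)] by (rule LIMSEQ_le_const) (use F(2) in blast)
    also have "\<dots> \<le> infsum q UNIV" by (rule finite_sum_le_infsum[OF summ F(1)]) (auto simp: q0)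
    finally show ?thesis .
  qed
  have inf1: "infsum q UNIV = 1"
  proof (rule ccontr)
    assume "infsum q UNIV \<noteq> 1"
    hence "0 < 1 - infsum q UNIV" using inf_le by simp
    then obtain M where "(1/2::real)^M < 1 - infsum q UNIV" using real_arch_pow_inv[of "1 - infsum q UNIV" "1/2"] by auto
    thus False using inf_ge[of M] by simp
  qed
  have abs: "Infinite_Set_Sum.abs_summable_on q UNIV"
    by (rule abs_summable_finite_sumsI[where B = 1]) (use le1 q0 in simp)
  have "nn_integral (count_space UNIV) (\<lambda>x. ennreal (q x)) = ennreal (infsetsum q UNIV)"
    by (rule nn_integral_conv_infsetsum[OF abs]) (simp add: q0)
  also have "infsetsum q UNIV = 1" using infsetsum_infsum[OF abs] inf1 by simp
  finally have int1: "(\<integral>\<^sup>+x. ennreal (q x) \<partial>count_space UNIV) = 1" by simp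
  show ?thesis
    using pmf_embed_pmf[of q, OF q0 int1] by blast
qed

lemma pi_fib:
  assumes d1: "1 \<le> d"
  shows "pmf (map_pmf (restr_ball d r) (mu01 d n)) g = real (card (fib d n r g)) / real (card (lip01 d n))"
proof -
  have "lip01 d n \<inter> restr_ball d r -` {g} = fib d n r g" by (auto simp: fib_def)
  thus ?thesis
    unfolding mu01_def pmf_map measure_pmf_of_set[OF lip01_ne finite_lip01[OF d1]] by simp
qed

lemma lip01_kap:
  assumes d1: "1 \<le> d" and f: "f \<in> lip01 d n"
  shows "kap (f []) \<le> n"
proof -
  have l: "replicate n 0 \<in> tree_ball d n" using d1 by (auto simp: tree_ball_def)
  have "f (replicate n 0) \<in> {0, 1}" using lip01_D(2)[OF f l] by simp
  moreover have "\<bar>f (replicate n 0) - f []\<bar> \<le> int n" using lip01_path[OF f l] by simp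
  ultimately have "- int n \<le> f [] \<and> f [] \<le> int n + 1" by auto
  thus ?thesis unfolding kap_def by auto
qed

lemma kap_eq: "kap y = k \<longleftrightarrow> (y = - int k \<or> y = int k + 1)"
  unfolding kap_def by (simp split: if_splits; arith)

lemma card_kapset:
  assumes d1: "1 \<le> d" and K: "K \<subseteq> {..n}"
  shows "real (card {f \<in> lip01 d n. kap (f []) \<in> K}) = (\<Sum>k\<in>K. 2 * Vs d n k)"
proof -
  have fK: "finite K" using K finite_subset by blast
  have finLB: "finite (LB d n y)" for y
    using finite_lip01[OF d1] by (rule finite_subset[rotated]) (auto simp: LB_def)
  have kn: "kap (- int k) = k" "kap (int k + 1) = k" for k by (simp_all add: kap_eq)
  have eq: "{f \<in> lip01 d n. kap (f []) \<in> K} = (\<Union>k\<in>K. LB d n (- int k) \<union> LB d n (int k + 1))"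
  proof (intro equalityI subsetI)
    fix f assume "f \<in> {f \<in> lip01 d n. kap (f []) \<in> K}"
    hence f: "f \<in> lip01 d n" "kap (f []) \<in> K" by auto
    have "f [] = - int (kap (f [])) \<or> f [] = int (kap (f [])) + 1" using kap_eq[of "f []" "kap (f [])"] by simp
    thus "f \<in> (\<Union>k\<in>K. LB d n (- int k) \<union> LB d n (int k + 1))" using f by (auto simp: LB_def)
  next
    fix f assume "f \<in> (\<Union>k\<in>K. LB d n (- int k) \<union> LB d n (int k + 1))"
    thus "f \<in> {f \<in> lip01 d n. kap (f []) \<in> K}" by (auto simp: LB_def kn)
  qed
  have "card {f \<in> lip01 d n. kap (f []) \<in> K} = (\<Sum>k\<in>K. card (LB d n (- int k) \<union> LB d n (int k + 1)))"
    unfolding eq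
  proof (rule card_UN_disjoint[OF fK])
    show "\<forall>k\<in>K. finite (LB d n (- int k) \<union> LB d n (int k + 1))" using finLB by blast
    show "\<forall>k\<in>K. \<forall>j\<in>K. k \<noteq> j \<longrightarrow> (LB d n (- int k) \<union> LB d n (int k + 1)) \<inter> (LB d n (- int j) \<union> LB d n (int j + 1)) = {}"
      by (auto simp: LB_def)
  qed
  also have "\<dots> = (\<Sum>k\<in>K. card (LB d n (- int k)) + card (LB d n (int k + 1)))"
    by (intro sum.cong refl card_Un_disjoint finLB) (auto simp: LB_def)
  finally have "real (card {f \<in> lip01 d n. kap (f []) \<in> K}) = (\<Sum>k\<in>K. real (card (LB d n (- int k))) + real (card (LB d n (int k + 1))))"
    by simp
  also have "\<dots> = (\<Sum>k\<in>K. 2 * Vs d n k)"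
  proof (intro sum.cong refl)
    fix k
    have "kap (- int k) = k" "kap (int k + 1) = k" by (simp_all add: kap_eq)
    thus "real (card (LB d n (- int k))) + real (card (LB d n (int k + 1))) = 2 * Vs d n k"
      using card_LB_Vs[OF d1, of n "- int k"] card_LB_Vs[OF d1, of n "int k + 1"] by simp
  qed
  finally show ?thesis .
qed

lemma card_lip01_real:
  assumes d1: "1 \<le> d"
  shows "real (card (lip01 d n)) = 2 * Vs d n 0 * ssum d n"
proof -
  have "{f \<in> lip01 d n. kap (f []) \<in> {..n}} = lip01 d n" using lip01_kap[OF d1] by auto
  hence "real (card (lip01 d n)) = (\<Sum>k\<in>{..n}. 2 * Vs d n k)"
    using card_kapset[OF d1, of "{..n}" n] by simp
  also have "\<dots> = 2 * Vs d n 0 * (\<Sum>k<Suc n. al d n k)"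
    unfolding al_def using Vs_pos0[of d n]
    by (simp add: sum_distrib_left lessThan_Suc_atMost)
  finally show ?thesis unfolding ssum_def .
qed

lemma ssum_ge1: "1 \<le> ssum d n"
proof -
  have "ssum d n = al d n 0 + (\<Sum>k<n. al d n (Suc k))"
    unfolding ssum_def by (rule sum.lessThan_Suc_shift)
  moreover have "0 \<le> (\<Sum>k<n. al d n (Suc k))" by (intro sum_nonneg al_nonneg)
  ultimately show ?thesis by simp
qed

definition Fbox :: "nat \<Rightarrow> nat \<Rightarrow> nat \<Rightarrow> (nat list \<Rightarrow> int) set" where
  "Fbox d r M = {g. (\<forall>v. v \<notin> tree_ball d r \<longrightarrow> g v = 0) \<and> (\<forall>v\<in>tree_ball d r. g v \<in> {-(int M + int r)..int M + int r + 1})}"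

lemma finite_Fbox: "finite (Fbox d r M)"
  unfolding Fbox_def by (rule finite_box[OF finite_tb]) simp

lemma tail_bound:
  assumes d: "2 \<le> d"
  shows "real (card {f \<in> lip01 d n. kap (f []) \<in> {M<..n}}) \<le> (1/2)^M * real (card (lip01 d n))"
proof -
  have d1: "1 \<le> d" using d by simp
  have "real (card {f \<in> lip01 d n. kap (f []) \<in> {M<..n}}) = (\<Sum>k\<in>{M<..n}. 2 * Vs d n k)"
    by (rule card_kapset[OF d1]) auto
  also have "\<dots> \<le> (\<Sum>k\<in>{M<..n}. 2 * ((1/2)^k * Vs d n 0))"
    by (intro sum_mono mult_left_mono Vs_geom[OF d]) auto
  also have "\<dots> = 2 * Vs d n 0 * (\<Sum>k\<in>{M<..n}. (1/2::real)^k)"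
    by (simp add: sum_distrib_left sum_distrib_right mult.commute mult.left_commute)
  also have "\<dots> \<le> 2 * Vs d n 0 * (1/2)^M"
    using geom_tail[of M n] Vs_pos0[of d n] by (intro mult_left_mono) auto
  also have "\<dots> \<le> 2 * Vs d n 0 * ssum d n * (1/2)^M"
    using ssum_ge1[of d n] Vs_pos0[of d n] by (intro mult_right_mono) auto
  also have "\<dots> = (1/2)^M * real (card (lip01 d n))"
    using card_lip01_real[OF d1, of n] by simp
  finally show ?thesis .
qed

lemma tightness:
  assumes d: "2 \<le> d" and rn: "r \<le> n"
  shows "1 - (1/2)^M \<le> measure_pmf.prob (map_pmf (restr_ball d r) (mu01 d n)) (Fbox d r M)"
proof -
  have d1: "1 \<le> d" using d by simp
  define A where "A = {f \<in> lip01 d n. kap (f []) \<in> {M<..n}}"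
  have fin: "finite (lip01 d n)" using finite_lip01[OF d1] .
  have T0: "0 < real (card (lip01 d n))" using fin lip01_ne by (simp add: card_gt_0_iff)
  have sub: "lip01 d n - A \<subseteq> lip01 d n \<inter> restr_ball d r -` Fbox d r M"
  proof
    fix f assume "f \<in> lip01 d n - A"
    hence f: "f \<in> lip01 d n" and kM: "kap (f []) \<le> M" using lip01_kap[OF d1, of f n] by (auto simp: A_def)
    have root: "- int M \<le> f [] \<and> f [] \<le> int M + 1" using kM unfolding kap_def by (auto split: if_splits)
    have "restr_ball d r f \<in> Fbox d r M"
      unfolding Fbox_def
    proof (intro CollectI conjI allI impI ballI)
      fix v assume "v \<notin> tree_ball d r" thus "restr_ball d r f v = 0" by (simp add: restr_ball_def)
    next
      fix v assume v: "v \<in> tree_ball d r"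
      have vn: "v \<in> tree_ball d n" using v tb_mono[OF rn] by auto
      have "\<bar>f v - f []\<bar> \<le> int (length v)" using lip01_path[OF f vn] .
      moreover have "length v \<le> r" using v by (simp add: tree_ball_def)
      ultimately show "restr_ball d r f v \<in> {-(int M + int r)..int M + int r + 1}"
        using v root by (auto simp: restr_ball_def)
    qed
    thus "f \<in> lip01 d n \<inter> restr_ball d r -` Fbox d r M" using f by simp
  qed
  have "real (card (lip01 d n - A)) \<le> real (card (lip01 d n \<inter> restr_ball d r -` Fbox d r M))"
    using sub fin by (simp add: card_mono)
  moreover have "real (card (lip01 d n - A)) = real (card (lip01 d n)) - real (card A)"
    using fin by (subst card_Diff_subset) (auto simp: A_def intro: finite_subset of_nat_diff card_mono)
  moreover have "real (card A) \<le> (1/2)^M * real (card (lip01 d n))" unfolding A_def by (rule tail_bound[OF d])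
  ultimately have "(1 - (1/2)^M) * real (card (lip01 d n)) \<le> real (card (lip01 d n \<inter> restr_ball d r -` Fbox d r M))"
    by (simp add: algebra_simps)
  hence "1 - (1/2)^M \<le> real (card (lip01 d n \<inter> restr_ball d r -` Fbox d r M)) / real (card (lip01 d n))"
    using T0 by (simp add: field_simps)
  thus ?thesis
    unfolding measure_map_pmf mu01_def measure_pmf_of_set[OF lip01_ne fin] .
qed

lemma pi_formula:
  assumes d1: "1 \<le> d" and g: "LipB d r g"
  shows "pmf (map_pmf (restr_ball d r) (mu01 d (h + r))) g
         = (\<Prod>v\<in>leaves d r. al d h (kap (g v))) / (2 * cr d r h * ssum d (h + r))"
proof -
  have p0: "0 < Vs d h 0" by (rule Vs_pos0)
  have "real (card (fib d (h + r) r g)) = (\<Prod>v\<in>leaves d r. real (card (LB d h (g v))))"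
    using card_fib[of r "h + r" d g] g by simp
  also have "\<dots> = (\<Prod>v\<in>leaves d r. al d h (kap (g v)) * Vs d h 0)"
    using p0 by (intro prod.cong refl) (simp add: card_LB_Vs[OF d1] al_def)
  also have "\<dots> = (\<Prod>v\<in>leaves d r. al d h (kap (g v))) * Vs d h 0 ^ (d ^ r)"
    by (simp add: prod.distrib card_leaves)
  finally have num: "real (card (fib d (h + r) r g)) = (\<Prod>v\<in>leaves d r. al d h (kap (g v))) * Vs d h 0 ^ (d ^ r)" .
  have den: "real (card (lip01 d (h + r))) = 2 * (cr d r h * Vs d h 0 ^ (d ^ r)) * ssum d (h + r)"
    using card_lip01_real[OF d1, of "h + r"] p0 unfolding cr_def by simp
  have V: "0 < Vs d h 0 ^ (d ^ r)" using p0 by simp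
  have c: "0 < cr d r h" unfolding cr_def using p0 Vs_pos0[of d "h + r"] by simp
  have s: "0 < ssum d (h + r)" using ssum_ge1[of d "h + r"] by simp
  show ?thesis unfolding pi_fib[OF d1] num den using V c s p0 by (simp add: field_simps)
qed

lemma pi_conv:
  assumes d: "2 \<le> d"
  shows "\<exists>L. (\<lambda>n. pmf (map_pmf (restr_ball d r) (mu01 d n)) g) \<longlonglongrightarrow> L"
proof (cases "LipB d r g")
  case True
  have d1: "1 \<le> d" using d by simp
  have alc: "(\<lambda>h. al d h k) \<longlonglongrightarrow> lim (\<lambda>h. al d h k)" for k
    using al_conv[OF d, of k] by (auto simp: convergent_def convergent_LIMSEQ_iff[symmetric])
  obtain C where C: "1 \<le> C" "(\<lambda>h. cr d r h) \<longlonglongrightarrow> C" using cr_conv[OF d] by blast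
  obtain S where S: "1 \<le> S" "(\<lambda>m. ssum d m) \<longlonglongrightarrow> S" using ssum_conv[OF d] by blast
  have S': "(\<lambda>h. ssum d (h + r)) \<longlonglongrightarrow> S" using LIMSEQ_ignore_initial_segment[OF S(2)] .
  have "(\<lambda>h. (\<Prod>v\<in>leaves d r. al d h (kap (g v))) / (2 * cr d r h * ssum d (h + r)))
        \<longlonglongrightarrow> (\<Prod>v\<in>leaves d r. lim (\<lambda>h. al d h (kap (g v)))) / (2 * C * S)"
    using C S by (intro tendsto_intros alc C(2) S') auto
  hence "(\<lambda>h. pmf (map_pmf (restr_ball d r) (mu01 d (h + r))) g)
        \<longlonglongrightarrow> (\<Prod>v\<in>leaves d r. lim (\<lambda>h. al d h (kap (g v)))) / (2 * C * S)"
    unfolding pi_formula[OF d1 True] .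
  hence "(\<lambda>n. pmf (map_pmf (restr_ball d r) (mu01 d n)) g)
        \<longlonglongrightarrow> (\<Prod>v\<in>leaves d r. lim (\<lambda>h. al d h (kap (g v)))) / (2 * C * S)"
    by (rule LIMSEQ_offset[where k = r])
  thus ?thesis by blast
next
  case False
  have d1: "1 \<le> d" using d by simp
  have "pmf (map_pmf (restr_ball d r) (mu01 d (h + r))) g = 0" for h
    unfolding pi_fib[OF d1] using fib_empty[of r "h + r" d g] False by simp
  hence "(\<lambda>h. pmf (map_pmf (restr_ball d r) (mu01 d (h + r))) g) \<longlonglongrightarrow> 0" by simp
  hence "(\<lambda>n. pmf (map_pmf (restr_ball d r) (mu01 d n)) g) \<longlonglongrightarrow> 0"
    by (rule LIMSEQ_offset[where k = r])
  thus ?thesis by blast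
qed

theorem theorem1p2:
  fixes d :: nat
  assumes "2 \<le> d"
  shows "\<forall>r. \<exists>p :: (nat list \<Rightarrow> int) pmf. \<forall>g.
           (\<lambda>n. pmf (map_pmf (restr_ball d r) (mu01 d n)) g) \<longlonglongrightarrow> pmf p g"
proof
  fix r
  define P where "P n = map_pmf (restr_ball d r) (mu01 d n)" for n
  define q where "q g = lim (\<lambda>n. pmf (P n) g)" for g
  have lim: "(\<lambda>n. pmf (P n) g) \<longlonglongrightarrow> q g" for g
    using pi_conv[OF assms, of r g] unfolding P_def q_def
    by (auto simp: convergent_def convergent_LIMSEQ_iff[symmetric])
  have tight: "\<exists>F N. finite F \<and> (\<forall>n\<ge>N. 1 - (1/2)^M \<le> measure_pmf.prob (P n) F)" for M :: nat
    using finite_Fbox tightness[OF assms] unfolding P_def by blast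
  obtain p where p: "\<forall>g. pmf p g = q g" using pmf_limit_exists[OF lim tight] by blast
  show "\<exists>p :: (nat list \<Rightarrow> int) pmf. \<forall>g. (\<lambda>n. pmf (map_pmf (restr_ball d r) (mu01 d n)) g) \<longlonglongrightarrow> pmf p g"
    using lim p unfolding P_def by metis
qed

end
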